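(* For relatively prime integers $r, s$ put $u = r^2 + s^2$, $v = 2r^2 - s^2$, and $\mathcal{S} = \{\pm u(u+v),\ \pm u(u-v),\ \pm v(u+v),\ \pm v(u-v)\}$. Then for all but finitely many pairs $(r,s)$ of relatively prime integers with $r \neq 0$, no element of $\mathcal{S}$ represents the same class in $\mathbb{Q}^\times/(\mathbb{Q}^\times)^2$ as any of $uv, -uv, u^2-v^2, -(u^2-v^2)$.
   Context: $\mathbb{Q}^\times/(\mathbb{Q}^\times)^2$ denotes the group of nonzero rationals modulo nonzero squares; two nonzero rationals represent the same class iff their quotient is a square of a rational. *)

theory Defs
  imports Complex_Main "HOL-Computational_Algebra.Primes"
begin

definition same_sq_class :: "rat \<Rightarrow> rat \<Rightarrow> bool" where
  "same_sq_class a b \<longleftrightarrow> a \<noteq> 0 \<and> b \<noteq> 0 \<and> (\<exists>q::rat. a / b = q ^ 2)"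

definition uval :: "int \<Rightarrow> int \<Rightarrow> int" where
  "uval r s = r ^ 2 + s ^ 2"

definition vval :: "int \<Rightarrow> int \<Rightarrow> int" where
  "vval r s = 2 * r ^ 2 - s ^ 2"

definition Sset :: "int \<Rightarrow> int \<Rightarrow> int set" where
  "Sset r s = (let u = uval r s; v = vval r s in
     {u * (u + v), - (u * (u + v)), u * (u - v), - (u * (u - v)),
      v * (u + v), - (v * (u + v)), v * (u - v), - (v * (u - v))})"

definition Tset :: "int \<Rightarrow> int \<Rightarrow> int set" where
  "Tset r s = (let u = uval r s; v = vval r s in
     {u * v, - (u * v), u ^ 2 - v ^ 2, - (u ^ 2 - v ^ 2)})"

end

theory Submission
  imports Defs "HOL-Computational_Algebra.Nth_Powers"
begin


lemma pow_split:
  fixes x y k :: int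
  assumes "coprime x y" "x * y = k ^ n" "x \<ge> 0" "y \<ge> 0" "n > 0"
  shows "\<exists>a. x = a ^ n"
proof (cases "x = 0")
  case True then show ?thesis using assms(5) by (auto intro!: exI[of _ 0])
next
  case xnz: False
  show ?thesis
  proof (cases "y = 0")
    case True
    then have "is_unit x" using assms(1) by simp
    then have "x = 1" using assms(3) by auto
    then show ?thesis by (auto intro!: exI[of _ 1])
  next
    case ynz: False
    have c: "coprime (nat x) (nat y)"
      using assms(1,3,4) by (metis abs_of_nonneg coprime_int_iff int_nat_eq nat_0_le)
    have "k ^ n = \<bar>k\<bar> ^ n" using assms(2,3,4)
      by (metis abs_of_nonneg power_abs zero_le_mult_iff)
    then have "nat x * nat y = (nat \<bar>k\<bar>) ^ n"
      using assms(2,3,4) by (metis nat_mult_distrib nat_power_eq abs_ge_zero)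
    then have "is_nth_power n (nat x * nat y)" by auto
    then have "is_nth_power n (nat x)"
      using is_nth_power_mult_coprime_natD(1)[OF c] xnz ynz assms(3,4) by auto
    then obtain z where "nat x = z ^ n" by (auto elim: is_nth_powerE)
    then have "x = int z ^ n" using assms(3) by (metis int_nat_eq of_nat_power)
    then show ?thesis by blast
  qed
qed

lemma sq_cancel:
  fixes a N k :: int
  assumes "a \<noteq> 0" "a^2 * N = k^2"
  shows "\<exists>j. N = j^2"
proof -
  have "a^2 dvd k^2" using assms(2) by (metis dvd_triv_left)
  then have "a dvd k" by simp
  then obtain j where "k = a * j" by blast
  then have "a^2 * N = a^2 * j^2" using assms(2) by (simp add: power_mult_distrib)
  then show ?thesis using assms(1) by auto
qed

lemma mod3_sq: "(x::int)^2 mod 3 = (if 3 dvd x then 0 else 1)"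
proof -
  have e: "x^2 mod 3 = ((x mod 3)^2) mod 3" by (simp add: power_mod)
  consider "x mod 3 = 0" | "x mod 3 = 1" | "x mod 3 = 2" by linarith
  then show ?thesis
  proof cases
    case 1 then show ?thesis using e by (simp add: dvd_eq_mod_eq_0)
  next
    case 2 then show ?thesis using e by (simp add: dvd_eq_mod_eq_0)
  next
    case 3 then show ?thesis using e by (simp add: dvd_eq_mod_eq_0)
  qed
qed

lemma three_dvd_sum_sq:
  fixes x y :: int
  assumes "3 dvd x^2 + y^2"
  shows "3 dvd x \<and> 3 dvd y"
proof -
  have e: "(x^2 + y^2) mod 3 = (x^2 mod 3 + y^2 mod 3) mod 3" by (simp add: mod_add_eq)
  have z: "(x^2 + y^2) mod 3 = 0" using assms by (simp add: dvd_eq_mod_eq_0)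
  show ?thesis
  proof (rule ccontr)
    assume "\<not> (3 dvd x \<and> 3 dvd y)"
    then consider "\<not> 3 dvd x" "3 dvd y" | "3 dvd x" "\<not> 3 dvd y" | "\<not> 3 dvd x" "\<not> 3 dvd y" by blast
    then show False
    proof cases
      case 1 then show False using e z mod3_sq[of x] mod3_sq[of y] by simp
    next
      case 2 then show False using e z mod3_sq[of x] mod3_sq[of y] by simp
    next
      case 3 then show False using e z mod3_sq[of x] mod3_sq[of y] by simp
    qed
  qed
qed

lemma mod4_sq: "(x::int)^2 mod 4 = (if even x then 0 else 1)"
proof (cases "even x")
  case True
  then obtain k where "x = 2*k" by blast
  then show ?thesis using True by (simp add: power2_eq_square)
next
  case False
  then obtain k where k: "x = 2*k+1" by (metis oddE)
  have "x^2 = 4*(k^2+k) + 1" unfolding k by (simp add: power2_eq_square algebra_simps)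
  then obtain t where "x^2 = 4*t+1" by blast
  then have "x^2 mod 4 = 1" by presburger
  then show ?thesis using False by simp
qed

lemma odd_sq_mod8: "odd (x::int) \<Longrightarrow> x^2 mod 8 = 1"
proof -
  assume "odd x"
  then obtain k where k: "x = 2*k+1" by (metis oddE)
  have "x^2 = 4*(k*(k+1)) + 1" unfolding k by (simp add: power2_eq_square algebra_simps)
  moreover have "even (k*(k+1))" by simp
  then obtain j where "k*(k+1) = 2*j" by blast
  ultimately have "x^2 = 8*j+1" by simp
  then show ?thesis by simp
qed

lemma sq_mod8: "(x::int)^2 mod 8 \<in> {0,1,4}"
proof (cases "even x")
  case True
  then obtain k where k: "x = 2*k" by blast
  have "x^2 = 4*k^2" unfolding k by (simp add: power2_eq_square)
  moreover have "(4*k^2) mod 8 = 4 * (k^2 mod 2)" by (simp add: mult_mod_right)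
  moreover have "k^2 mod 2 = 0 \<or> k^2 mod 2 = 1" by presburger
  ultimately show ?thesis by auto
next
  case False then show ?thesis using odd_sq_mod8 by simp
qed

lemma dvd3_cases: "(c::int) dvd 3 \<Longrightarrow> is_unit c \<or> 3 dvd c"
proof -
  assume h: "c dvd 3"
  then have a: "\<bar>c\<bar> dvd 3" by simp
  then have "\<bar>c\<bar> \<le> 3" using zdvd_imp_le by auto
  moreover have "\<bar>c\<bar> \<noteq> 0" using h by auto
  moreover have "\<bar>c\<bar> \<noteq> 2"
  proof
    assume "\<bar>c\<bar> = 2" then have "(2::int) dvd 3" using a by metis
    then show False by simp
  qed
  ultimately have "\<bar>c\<bar> = 1 \<or> \<bar>c\<bar> = 3" by linarith
  then show ?thesis
  proof
    assume "\<bar>c\<bar> = 1" then show ?thesis by (metis abs_dvd_iff dvd_refl)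
  next
    assume "\<bar>c\<bar> = 3" then show ?thesis by (metis dvd_abs_iff dvd_refl)
  qed
qed

lemma dvd_3_of_coprime:
  fixes r s c :: int
  assumes "coprime r s" "c dvd 3 * r^2" "c dvd 3 * s^2"
  shows "c dvd 3"
proof -
  have "c dvd gcd (3 * r^2) (3 * s^2)" using assms by simp
  also have "gcd (3 * r^2) (3 * s^2) = 3 * gcd (r^2) (s^2)"
    using gcd_mult_distrib_int[of 3 "r^2" "s^2"] by simp
  also have "gcd (r^2) (s^2) = 1" using assms(1) by simp
  finally show ?thesis by simp
qed




lemma coprime_odd: "coprime (r::int) s \<Longrightarrow> even r \<Longrightarrow> odd s"
  using coprime_common_divisor[of r s 2] by auto

lemma m4a: "N = R - 2*S \<Longrightarrow> R mod 4 = 0 \<Longrightarrow> S mod 4 = 1 \<Longrightarrow> N mod 4 = 0 \<or> N mod 4 = 1 \<Longrightarrow> False"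
  for N R S :: int by presburger

lemma m4b: "N = R + S \<Longrightarrow> R mod 4 = 1 \<Longrightarrow> S mod 4 = 1 \<Longrightarrow> N mod 4 = 0 \<or> N mod 4 = 1 \<Longrightarrow> False"
  for N R S :: int by presburger

lemma sq4: "(x::int)^2 mod 4 = 0 \<or> x^2 mod 4 = 1" using mod4_sq[of x] by (auto split: if_splits)
lemma sq4e: "even (x::int) \<Longrightarrow> x^2 mod 4 = 0" using mod4_sq[of x] by simp
lemma sq4o: "odd (x::int) \<Longrightarrow> x^2 mod 4 = 1" using mod4_sq[of x] by simp

lemma sq_dvd_small_unit:
  fixes c k :: int
  assumes "c^2 dvd k" "0 < k" "k < 4"
  shows "is_unit c"
proof -
  have "c^2 \<le> k" using assms zdvd_imp_le by blast
  then have "\<bar>c\<bar>^2 < 2^2" using assms(3) by simp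
  then have "\<bar>c\<bar> < 2" using power_less_imp_less_base by fastforce
  moreover have "c \<noteq> 0" using assms by auto
  ultimately have "\<bar>c\<bar> = 1" by linarith
  then show ?thesis by (metis abs_dvd_iff dvd_refl)
qed

lemma m4c: "B + D = 4*Z \<Longrightarrow> D mod 4 = 1 \<Longrightarrow> B mod 4 = 0 \<or> B mod 4 = 1 \<Longrightarrow> False"
  for B D Z :: int by presburger

lemma m8a: "E = 2*C + D \<Longrightarrow> C mod 8 = 1 \<Longrightarrow> D mod 8 = 1 \<Longrightarrow> E mod 8 \<in> {0,1,4} \<Longrightarrow> False"
  for E C D :: int
proof -
  assume a: "E = 2*C + D" "C mod 8 = 1" "D mod 8 = 1" "E mod 8 \<in> {0,1,4}"
  then have "E mod 8 = 0 \<or> E mod 8 = 1 \<or> E mod 8 = 4" by simp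
  with a(1-3) show False by presburger
qed

lemma cop_sym: "coprime a b \<Longrightarrow> coprime b a" by (simp add: coprime_commute)

lemma prime3: "prime (3::int)" by simp
lemma prime2: "prime (2::int)" by simp

lemma sq_lt_abs: "(x::int)^2 < y^2 \<Longrightarrow> nat \<bar>x\<bar> < nat \<bar>y\<bar>"
proof -
  assume "x^2 < y^2"
  then have "\<bar>x\<bar>^2 < \<bar>y\<bar>^2" by simp
  then have "\<bar>x\<bar> < \<bar>y\<bar>" using power_less_imp_less_base by fastforce
  then show ?thesis by simp
qed

lemma one_le_sq: "(x::int) \<noteq> 0 \<Longrightarrow> 1 \<le> x^2"
proof -
  assume "x \<noteq> 0" then have "x^2 > 0" by simp
  then show ?thesis by linarith
qed

lemma even_sq_iff: "even ((x::int)^2) \<longleftrightarrow> even x" by simp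

lemma descA:
  fixes r s m n :: int
  assumes "coprime r s" "s \<noteq> 0" "r^2 + s^2 = m^2" "r^2 - 2*s^2 = n^2"
  shows False
  using assms
proof (induction "nat \<bar>s\<bar>" arbitrary: r s m n rule: less_induct)
  case less
  note cop = less.prems(1) and snz = less.prems(2) and e1 = less.prems(3) and e2 = less.prems(4)
  have rodd: "odd r"
  proof (rule notI)
    assume re: "even r"
    then have so: "odd s" using cop coprime_odd by blast
    show False using m4a[OF e2[symmetric] sq4e[OF re] sq4o[OF so] sq4[of n]] .
  qed
  have seven: "even s"
  proof (rule ccontr)
    assume so: "odd s"
    show False using m4b[OF e1[symmetric] sq4o[OF rodd] sq4o[OF so] sq4[of m]] .
  qed
  have modd: "odd m"
  proof -
    have "odd (r^2 + s^2)" using rodd seven by simp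
    then show ?thesis using e1 by simp
  qed
  have nodd: "odd n"
  proof -
    have "odd (r^2 - 2*s^2)" using rodd by simp
    then show ?thesis using e2 by simp
  qed
  obtain t where st: "s = 2*t" using seven by blast
  have tnz: "t \<noteq> 0" using snz st by simp
  define M where "M = \<bar>m\<bar>"
  define N where "N = \<bar>n\<bar>"
  have M2: "M^2 = m^2" and N2: "N^2 = n^2" unfolding M_def N_def by simp_all
  have Mo: "odd M" and No: "odd N" using modd nodd unfolding M_def N_def by simp_all
  have M0: "M \<ge> 0" and N0: "N \<ge> 0" unfolding M_def N_def by simp_all
  have diff: "M^2 - N^2 = 3*s^2" using e1 e2 M2 N2 by simp
  have sum: "2*M^2 + N^2 = 3*r^2" using e1 e2 M2 N2 by simp
  have "even (M + N)" using Mo No by simp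
  then obtain X where X: "M + N = 2*X" by (rule evenE)
  have "even (M - N)" using Mo No by simp
  then obtain Y where Y: "M - N = 2*Y" by (rule evenE)
  have XY: "X * Y = 3 * t^2"
  proof -
    have "(M+N)*(M-N) = M^2 - N^2" by (simp add: power2_eq_square algebra_simps)
    also have "\<dots> = 3*s^2" by (rule diff)
    also have "\<dots> = 4*(3*t^2)" using st by simp
    finally have "4*(3*t^2) = (2*X)*(2*Y)" using X Y by simp
    then show ?thesis by simp
  qed
  have "3*s^2 > 0" using snz by simp
  then have "M^2 > N^2" using diff by linarith
  then have MN: "M > N" using M0 power_less_imp_less_base by blast
  have Xp: "X > 0" using X MN N0 by simp
  have Yp: "Y > 0" using Y MN by simp
  have copXY: "coprime X Y"
  proof (rule coprimeI)
    fix c assume cX: "c dvd X" and cY: "c dvd Y"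
    have "M = X + Y" using X Y by linarith
    then have cM: "c dvd M" using cX cY by simp
    have cN: "c dvd N"
    proof -
      have "N = X - Y" using X Y by linarith
      then show ?thesis using cX cY by simp
    qed
    have c2M: "c^2 dvd M^2" and c2N: "c^2 dvd N^2" using cM cN by simp_all
    have "c^2 dvd 3*s^2" using dvd_diff[OF c2M c2N] diff by simp
    moreover have "c^2 dvd 3*r^2" using dvd_add[OF dvd_mult[OF c2M, of 2] c2N] sum by simp
    ultimately have "c^2 dvd 3" using dvd_3_of_coprime[OF cop] by blast
    then show "is_unit c" using sq_dvd_small_unit by simp
  qed
  have "3 dvd X * Y" using XY by simp
  then have "3 dvd X \<or> 3 dvd Y" using prime_dvd_mult_iff[OF prime3] by blast
  then obtain a b where ab: "coprime a b" "M = 3*a^2 + b^2" "t^2 = a^2*b^2"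
  proof
    assume "3 dvd X"
    then obtain X' where X': "X = 3*X'" by blast
    have e: "X' * Y = t^2" using XY X' by simp
    have c: "coprime X' Y" using copXY X' by simp
    have "X' > 0" using Xp X' by simp
    obtain a where a: "X' = a^2" using pow_split[OF c e] \<open>X' > 0\<close> Yp by fastforce
    obtain b where b: "Y = b^2" using pow_split[OF cop_sym[OF c], of t 2] e \<open>X' > 0\<close> Yp
      by (auto simp: mult.commute)
    have "coprime a b" using c a b by simp
    moreover have "M = 3*a^2 + b^2" using X Y X' a b by linarith
    moreover have "t^2 = a^2*b^2" using e a b by simp
    ultimately show ?thesis using that by blast
  next
    assume "3 dvd Y"
    then obtain Y' where Y': "Y = 3*Y'" by blast
    have e: "X * Y' = t^2" using XY Y' by (simp add: algebra_simps)
    have c: "coprime X Y'" using copXY Y' by simp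
    have "Y' > 0" using Yp Y' by simp
    obtain b where b: "X = b^2" using pow_split[OF c e] \<open>Y' > 0\<close> Xp by fastforce
    obtain a where a: "Y' = a^2" using pow_split[OF cop_sym[OF c], of t 2] e \<open>Y' > 0\<close> Xp
      by (auto simp: mult.commute)
    have "coprime a b" using c a b by (simp add: coprime_commute)
    moreover have "M = 3*a^2 + b^2" using X Y Y' a b by linarith
    moreover have "t^2 = a^2*b^2" using e a b by (simp add: ac_simps)
    ultimately show ?thesis using that by blast
  qed
  have anz: "a \<noteq> 0" and bnz: "b \<noteq> 0" using ab(3) tnz by auto
  have s2: "s^2 = 4*a^2*b^2" using st ab(3) by (simp add: power_mult_distrib)
  define w where "w = \<bar>r\<bar>"
  define h where "h = a^2 + b^2"
  have w0: "w \<ge> 0" and wo: "odd w" using rodd unfolding w_def by simp_all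
  have ho: "odd h"
  proof -
    have "M = h + 2*a^2" using ab(2) unfolding h_def by simp
    then show ?thesis using Mo by simp
  qed
  have h0: "h > 0" using anz unfolding h_def by (simp add: add_pos_nonneg)
  have w2: "w^2 = (3*a^2 + b^2)^2 - 4*a^2*b^2"
    using e1 M2 ab(2) s2 unfolding w_def by simp
  have wh: "w^2 - h^2 = 8*a^4"
    unfolding w2 h_def by (simp add: power2_eq_square algebra_simps power4_eq_xxxx)
  have "8*a^4 > 0" using anz by simp
  then have "h^2 < w^2" using wh by linarith
  then have hw: "h < w" using w0 power_less_imp_less_base by blast
  have "even (w - h)" "even (w + h)" using wo ho by simp_all
  then obtain P Q where P: "w - h = 2*P" and Q: "w + h = 2*Q" by (meson evenE)
  have PQ: "P * Q = 2*a^4"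
  proof -
    have "(2*P)*(2*Q) = (w-h)*(w+h)" using P Q by simp
    also have "\<dots> = w^2 - h^2" by (simp add: power2_eq_square algebra_simps)
    finally show ?thesis using wh by simp
  qed
  have Pp: "P > 0" using P hw by simp
  have Qp: "Q > 0" using Q h0 w0 by simp
  have wPQ: "w = P + Q" and hPQ: "h = Q - P" using P Q by linarith+
  have copab2: "coprime a (b^2)" using ab(1) by simp
  have copPQ: "coprime P Q"
  proof (rule coprimeI)
    fix c assume cP: "c dvd P" and cQ: "c dvd Q"
    have ch: "c dvd h" using cP cQ hPQ by simp
    have "coprime c a"
    proof (rule coprimeI)
      fix d assume dc: "d dvd c" and da: "d dvd a"
      have "d dvd h" using dc ch by (rule dvd_trans)
      moreover have "d dvd a^2" using da by (simp add: power2_eq_square dvd_mult2)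
      ultimately have "d dvd (a^2 + b^2) - a^2" unfolding h_def by (rule dvd_diff)
      then have "d dvd b^2" by simp
      then show "is_unit d" using coprime_common_divisor[OF copab2 da] by simp
    qed
    then have cc: "coprime (c^2) (a^4)" by simp
    have "c^2 dvd P * Q" using cP cQ by (simp add: power2_eq_square mult_dvd_mono)
    then have "c^2 dvd 2 * a^4" using PQ by simp
    then have "c^2 dvd 2" using cc coprime_dvd_mult_left_iff by blast
    then show "is_unit c" using sq_dvd_small_unit by simp
  qed
  have a2s2: "a^2 < s^2" using s2 anz bnz
  proof -
    have "b^2 \<ge> 1" using bnz by (rule one_le_sq) 
    then have "4*a^2*b^2 \<ge> 4*a^2" using anz by simp
    then show ?thesis using s2 anz by simp
  qed
  have "2 dvd P * Q" using PQ by simp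
  then have "2 dvd P \<or> 2 dvd Q" using prime_dvd_mult_iff[OF prime2] by blast
  then show False
  proof
    assume "2 dvd P"
    then obtain P' where P': "P = 2*P'" by blast
    have e: "P' * Q = a^4" using PQ P' by simp
    have c: "coprime P' Q" using copPQ P' by simp
    have "P' > 0" using Pp P' by simp
    obtain c0 where c0: "P' = c0^4" using pow_split[OF c e] \<open>P' > 0\<close> Qp by fastforce
    obtain d0 where d0: "Q = d0^4" using pow_split[OF cop_sym[OF c], of a 4] e \<open>P' > 0\<close> Qp
      by (auto simp: mult.commute)
    have "(a^2)^2 = (c0^2*d0^2)^2" using e c0 d0 by (simp add: power_mult_distrib flip: power_mult)
    then have aa: "a^2 = c0^2*d0^2" by (subst (asm) power2_eq_iff_nonneg) auto
    have cop0: "coprime c0 d0" using c c0 d0 by simp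
    have c0nz: "c0 \<noteq> 0" and d0nz: "d0 \<noteq> 0" using aa anz by auto
    have bb: "b^2 = (d0^2 + c0^2) * (d0^2 - 2*c0^2)"
    proof -
      have "b^2 = h - a^2" unfolding h_def by simp
      also have "\<dots> = d0^4 - 2*c0^4 - c0^2*d0^2" using hPQ P' c0 d0 aa by simp
      finally show ?thesis by (simp add: power2_eq_square algebra_simps power4_eq_xxxx)
    qed
    have cop1: "coprime (d0^2 + c0^2) (d0^2 - 2*c0^2)"
    proof (rule coprimeI)
      fix c assume c1: "c dvd d0^2 + c0^2" and c2: "c dvd d0^2 - 2*c0^2"
      have "c dvd 3*c0^2" using dvd_diff[OF c1 c2] by simp
      moreover have "c dvd 3*d0^2" using dvd_add[OF dvd_mult[OF c1, of 2] c2] by simp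
      ultimately have "c dvd 3" using dvd_3_of_coprime[OF cop0] by blast
      then have "is_unit c \<or> 3 dvd c" by (rule dvd3_cases)
      then show "is_unit c"
      proof
        assume "3 dvd c"
        then have "3 dvd d0^2 + c0^2" using c1 by (rule dvd_trans)
        then have "3 dvd d0 \<and> 3 dvd c0" by (rule three_dvd_sum_sq)
        then have "is_unit (3::int)" using coprime_common_divisor[OF cop0] by blast
        then show ?thesis by simp
      qed
    qed
    have "b^2 > 0" using bnz by simp
    moreover have "d0^2 + c0^2 > 0" using c0nz by (simp add: add_nonneg_pos)
    ultimately have "d0^2 - 2*c0^2 > 0" using bb by (simp add: zero_less_mult_iff)
    then obtain m' where m': "d0^2 + c0^2 = m'^2"
      using pow_split[OF cop1 bb[symmetric]] \<open>d0^2 + c0^2 > 0\<close> by fastforce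
    obtain n' where n': "d0^2 - 2*c0^2 = n'^2"
      using pow_split[OF cop_sym[OF cop1], of b 2] bb \<open>d0^2 + c0^2 > 0\<close> \<open>d0^2 - 2*c0^2 > 0\<close>
      by (auto simp: mult.commute)
    have "c0^2 \<le> a^2"
    proof -
      have "d0^2 \<ge> 1" using d0nz by (rule one_le_sq)
      then show ?thesis using aa by (simp add: mult_le_cancel_left1) 
    qed
    then have lt: "nat \<bar>c0\<bar> < nat \<bar>s\<bar>" using a2s2 sq_lt_abs by fastforce
    show False using less.hyps[OF lt] cop_sym[OF cop0] c0nz m' n' by blast
  next
    assume "2 dvd Q"
    then obtain Q' where Q': "Q = 2*Q'" by blast
    have e: "P * Q' = a^4" using PQ Q' by (simp add: algebra_simps)
    have c: "coprime P Q'" using copPQ Q' by simp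
    have "Q' > 0" using Qp Q' by simp
    obtain d0 where d0: "P = d0^4" using pow_split[OF c e] \<open>Q' > 0\<close> Pp by fastforce
    obtain c0 where c0: "Q' = c0^4" using pow_split[OF cop_sym[OF c], of a 4] e \<open>Q' > 0\<close> Pp
      by (auto simp: mult.commute)
    have "(a^2)^2 = (c0^2*d0^2)^2" using e c0 d0 by (simp add: power_mult_distrib algebra_simps flip: power_mult)
    then have aa: "a^2 = c0^2*d0^2" by (subst (asm) power2_eq_iff_nonneg) auto
    have cop0: "coprime c0 d0" using c c0 d0 by (simp add: coprime_commute)
    have c0nz: "c0 \<noteq> 0" and d0nz: "d0 \<noteq> 0" using aa anz by auto
    have bb': "b^2 = 2*c0^4 - d0^4 - c0^2*d0^2"
    proof -
      have "b^2 = h - a^2" unfolding h_def by simp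
      then show ?thesis using hPQ Q' c0 d0 aa by simp
    qed
    have bb: "b^2 = (2*c0^2 + d0^2) * (c0^2 - d0^2)"
      unfolding bb' by (simp add: power2_eq_square algebra_simps power4_eq_xxxx)
    have d0o: "odd d0"
    proof -
      have "odd (d0^4 + 2*c0^4)" using wo wPQ d0 Q' c0 by simp
      then show ?thesis by simp
    qed
    have c0o: "odd c0"
    proof (rule notI)
      assume "even c0"
      then obtain e where ce: "c0 = 2*e" by blast
      have E: "b^2 + (d0^2)^2 = 4*(8*e^4 - e^2*d0^2)"
        using bb' unfolding ce by (simp add: power2_eq_square algebra_simps power4_eq_xxxx)
      have D: "(d0^2)^2 mod 4 = 1" using d0o sq4o[of "d0^2"] by simp
      show False using m4c[OF E D sq4[of b]] .
    qed
    show False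
    proof (cases "3 dvd c0^2 - d0^2")
      case True
      have "3 dvd 2*c0^2 + d0^2"
      proof -
        have "2*c0^2 + d0^2 = 3*c0^2 - (c0^2 - d0^2)" by simp
        moreover have "3 dvd 3*c0^2 - (c0^2 - d0^2)" using dvd_diff[OF dvd_triv_left[of 3 "c0^2"] True] .
        ultimately show ?thesis by simp
      qed
      then obtain X2 where X2: "2*c0^2 + d0^2 = 3*X2" by blast
      obtain Y2 where Y2: "c0^2 - d0^2 = 3*Y2" using True by blast
      have "b^2 = 9*(X2*Y2)" using bb X2 Y2 by simp
      then have "3 dvd b^2" by simp
      then have "3 dvd b" using prime_dvd_power_iff[OF prime3] by simp
      then obtain b' where b': "b = 3*b'" by blast
      have eXY: "X2 * Y2 = b'^2" using \<open>b^2 = 9*(X2*Y2)\<close> b' by (simp add: power_mult_distrib)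
      have cop0': "coprime (c0^2) (d0^2)" using cop0 by simp
      have copX: "coprime X2 Y2"
      proof (rule coprimeI)
        fix c assume cx: "c dvd X2" and cy: "c dvd Y2"
        have "c0^2 = X2 + Y2" using X2 Y2 by linarith
        then have "c dvd c0^2" using cx cy by simp
        moreover have "d0^2 = X2 - 2*Y2" using X2 Y2 by linarith
        then have "c dvd d0^2" using cx cy by simp
        ultimately show "is_unit c" using coprime_common_divisor[OF cop0'] by blast
      qed
      have X2p: "X2 > 0" using X2 c0nz
      proof -
        have "2*c0^2 + d0^2 > 0" using c0nz by (simp add: add_pos_nonneg)
        then show ?thesis using X2 by simp
      qed
      have "b'^2 > 0" using bnz b' by simp
      then have "X2 * Y2 > 0" using eXY by simp
      then have Y2p: "Y2 > 0" using X2p zero_less_mult_pos by blast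
      obtain e where e: "X2 = e^2" using pow_split[OF copX eXY] X2p Y2p by fastforce
      obtain f where f: "Y2 = f^2" using pow_split[OF cop_sym[OF copX], of b' 2] eXY X2p Y2p
        by (auto simp: mult.commute)
      have copef: "coprime e f" using copX e f by simp
      have fnz: "f \<noteq> 0" using Y2p f by auto
      have E1: "e^2 + f^2 = c0^2" using X2 Y2 e f by linarith
      have E2: "e^2 - 2*f^2 = d0^2" using X2 Y2 e f by linarith
      have "e^2 \<ge> 0" by simp
      then have "f^2 \<le> c0^2" using E1 by linarith
      moreover have "c0^2 \<le> a^2"
      proof -
        have "d0^2 \<ge> 1" using d0nz by (rule one_le_sq)
        then show ?thesis using aa by (simp add: mult_le_cancel_left1) 
      qed
      ultimately have lt: "nat \<bar>f\<bar> < nat \<bar>s\<bar>" using a2s2 sq_lt_abs by fastforce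
      show False using less.hyps[OF lt] copef fnz E1 E2 by blast
    next
      case False
      have cop1: "coprime (2*c0^2 + d0^2) (c0^2 - d0^2)"
      proof (rule coprimeI)
        fix c assume c1: "c dvd 2*c0^2 + d0^2" and c2: "c dvd c0^2 - d0^2"
        have "c dvd 3*c0^2" using dvd_add[OF c1 c2] by simp
        moreover have "c dvd 3*d0^2" using dvd_diff[OF c1 dvd_mult[OF c2, of 2]] by (simp add: algebra_simps)
        ultimately have "c dvd 3" using dvd_3_of_coprime[OF cop0] by blast
        then have "is_unit c \<or> 3 dvd c" by (rule dvd3_cases)
        then show "is_unit c"
        proof
          assume "3 dvd c"
          then have "3 dvd c0^2 - d0^2" using c2 by (rule dvd_trans)
          then show ?thesis using False by simp
        qed
      qed
      have pos: "2*c0^2 + d0^2 > 0" using c0nz by (simp add: add_pos_nonneg)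
      have "b^2 > 0" using bnz by simp
      then have "c0^2 - d0^2 > 0" using bb pos by (simp add: zero_less_mult_iff)
      then obtain e where e: "2*c0^2 + d0^2 = e^2"
        using pow_split[OF cop1 bb[symmetric]] pos by fastforce
      have "c0^2 mod 8 = 1" "d0^2 mod 8 = 1" using c0o d0o odd_sq_mod8 by blast+
      then show False using m8a[OF e[symmetric]] sq_mod8[of e] by blast
    qed
  qed
qed




lemma cop4: "odd (c::int) \<Longrightarrow> coprime c 4"
proof -
  assume "odd c"
  then have "coprime 2 c" by simp
  then have "coprime (2*2) c" by (simp only: coprime_mult_left_iff)
  then have "coprime 4 c" by simp
  then show ?thesis by (simp add: coprime_commute)
qed

lemma Dstep:
  fixes E F g :: int
  assumes cop: "coprime E F" and Eo: "odd E" and Fe: "even F" and Fnz: "F \<noteq> 0"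
    and eq: "E^4 - E^2*F^2 + F^4 = g^2"
  shows "\<exists>k n m l. coprime k n \<and> k \<noteq> 0 \<and> odd n \<and> k^2 + n^2 = l^2 \<and> 4*k^2 + n^2 = m^2
           \<and> nat \<bar>k\<bar> < nat \<bar>F\<bar>"
proof -
  obtain f' where F: "F = 2*f'" using Fe by blast
  have fnz: "f' \<noteq> 0" using F Fnz by simp
  define G where "G = \<bar>g\<bar>"
  define H where "H = E^2 - 2*f'^2"
  have G0: "G \<ge> 0" unfolding G_def by simp
  have Ho: "odd H" using Eo unfolding H_def by simp
  have GH: "G^2 = H^2 + 12*f'^4"
  proof -
    have "G^2 = g^2" unfolding G_def by simp
    also have "\<dots> = E^4 - E^2*F^2 + F^4" using eq by simp
    finally show ?thesis unfolding H_def F by (simp add: power2_eq_square algebra_simps power4_eq_xxxx)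
  qed
  have Go: "odd G"
  proof -
    have "odd (H^2 + 12*f'^4)" using Ho by simp
    then have "odd (G^2)" using GH by simp
    then show ?thesis by simp
  qed
  have "12*f'^4 > 0" using fnz by simp
  then have "\<bar>H\<bar>^2 < G^2" using GH by simp
  then have HG: "\<bar>H\<bar> < G" using G0 power_less_imp_less_base by blast
  have "even (G - H)" "even (G + H)" using Go Ho by simp_all
  then obtain U V where U: "G - H = 2*U" and V: "G + H = 2*V" by (meson evenE)
  have UV: "U * V = 3*f'^4"
  proof -
    have "(2*U)*(2*V) = (G-H)*(G+H)" using U V by simp
    also have "\<dots> = G^2 - H^2" by (simp add: power2_eq_square algebra_simps)
    finally show ?thesis using GH by simp
  qed
  have Up: "U > 0" using U HG by linarith
  have Vp: "V > 0" using V HG by linarith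
  have GUV: "G = U + V" and HUV: "H = V - U" using U V by linarith+
  have copEf: "coprime E f'" using cop F by simp
  have copUV: "coprime U V"
  proof (rule coprimeI)
    fix c assume cU: "c dvd U" and cV: "c dvd V"
    have cH: "c dvd H" using cU cV HUV by simp
    have "coprime c f'"
    proof (rule coprimeI)
      fix d assume dc: "d dvd c" and df: "d dvd f'"
      have "d dvd H" using dc cH by (rule dvd_trans)
      moreover have "d dvd 2*f'^2" using df by (simp add: power2_eq_square dvd_mult2)
      ultimately have "d dvd H + 2*f'^2" by (rule dvd_add)
      then have "d dvd E^2" unfolding H_def by simp
      moreover have "coprime (E^2) f'" using copEf by simp
      ultimately show "is_unit d" using coprime_common_divisor df by blast
    qed
    then have cc: "coprime (c^2) (f'^4)" by simp
    have "c^2 dvd U * V" using cU cV by (simp add: power2_eq_square mult_dvd_mono)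
    then have "c^2 dvd 3 * f'^4" using UV by simp
    then have "c^2 dvd 3" using cc coprime_dvd_mult_left_iff by blast
    then show "is_unit c" using sq_dvd_small_unit by simp
  qed
  have "3 dvd U * V" using UV by simp
  then have "3 dvd U \<or> 3 dvd V" using prime_dvd_mult_iff[OF prime3] by blast
  then show ?thesis
  proof
    assume "3 dvd U"
    then obtain U' where U': "U = 3*U'" by blast
    have e: "U' * V = f'^4" using UV U' by simp
    have c: "coprime U' V" using copUV U' by simp
    have "U' > 0" using Up U' by simp
    obtain k where k: "U' = k^4" using pow_split[OF c e] \<open>U' > 0\<close> Vp by fastforce
    have e': "V * U' = f'^4" using e by (simp add: ac_simps)
    obtain l where l: "V = l^4" using pow_split[OF cop_sym[OF c] e'] \<open>U' > 0\<close> Vp by fastforce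
    have "(f'^2)^2 = (k^2*l^2)^2" using e k l by (simp add: power_mult_distrib flip: power_mult)
    then have ff: "f'^2 = k^2*l^2" by (subst (asm) power2_eq_iff_nonneg) auto
    have copkl: "coprime k l" using c k l by simp
    have knz: "k \<noteq> 0" and lnz: "l \<noteq> 0" using ff fnz by auto
    have EE: "E^2 = (l^2 + 3*k^2) * (l^2 - k^2)"
    proof -
      have "E^2 = H + 2*f'^2" unfolding H_def by simp
      also have "\<dots> = l^4 - 3*k^4 + 2*k^2*l^2" using HUV U' k l ff by simp
      finally show ?thesis by (simp add: power2_eq_square algebra_simps power4_eq_xxxx)
    qed
    have "odd ((l^2 + 3*k^2) * (l^2 - k^2))" unfolding EE[symmetric] using Eo by simp
    then have o1: "odd (l^2 + 3*k^2)" and o2: "odd (l^2 - k^2)" by simp_all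
    have cop1: "coprime (l^2 + 3*k^2) (l^2 - k^2)"
    proof (rule coprimeI)
      fix c assume c1: "c dvd l^2 + 3*k^2" and c2: "c dvd l^2 - k^2"
      have co: "odd c"
      proof (rule notI)
        assume "even c"
        then have "2 dvd l^2 - k^2" using c2 by (rule dvd_trans)
        then show False using o2 by simp
      qed
      have "c dvd 4*k^2" using dvd_diff[OF c1 c2] by simp
      then have ck: "c dvd k^2" using cop4[OF co] coprime_dvd_mult_right_iff by blast
      have "c dvd 4*l^2" using dvd_add[OF c1 dvd_mult[OF c2, of 3]] by (simp add: algebra_simps)
      then have cl: "c dvd l^2" using cop4[OF co] coprime_dvd_mult_right_iff by blast
      have "coprime (k^2) (l^2)" using copkl by simp
      then show "is_unit c" using coprime_common_divisor ck cl by blast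
    qed
    have pos: "l^2 + 3*k^2 > 0" using lnz by (simp add: add_pos_nonneg)
    have "E \<noteq> 0" using Eo by auto
    then have "E^2 > 0" by simp
    then have pos2: "l^2 - k^2 > 0" using EE pos by (simp add: zero_less_mult_iff)
    obtain m where m: "l^2 + 3*k^2 = m^2" using pow_split[OF cop1 EE[symmetric]] pos pos2 by fastforce
    have EE': "(l^2 - k^2) * (l^2 + 3*k^2) = E^2" using EE by (simp add: ac_simps)
    obtain n where n: "l^2 - k^2 = n^2" using pow_split[OF cop_sym[OF cop1] EE'] pos pos2 by fastforce
    have no: "odd n" using o2 n by simp
    have copkn: "coprime k n"
    proof (rule coprimeI)
      fix d assume dk: "d dvd k" and dn: "d dvd n"
      have "d^2 dvd k^2" "d^2 dvd n^2" using dk dn by simp_all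
      then have "d^2 dvd n^2 + k^2" by simp
      moreover have "n^2 + k^2 = l^2" using n by simp
      ultimately have "d^2 dvd l^2" by simp
      then have "d dvd l" by simp
      then show "is_unit d" using coprime_common_divisor[OF copkl dk] by simp
    qed
    have "k^2 \<le> f'^2"
    proof -
      have "l^2 \<ge> 1" using lnz by (rule one_le_sq)
      then show ?thesis using ff by (simp add: mult_le_cancel_left1)
    qed
    moreover have "f'^2 < F^2" using F fnz by simp
    ultimately have lt: "nat \<bar>k\<bar> < nat \<bar>F\<bar>" using sq_lt_abs by fastforce
    have q1: "k^2 + n^2 = l^2" using n by simp
    have q2: "4*k^2 + n^2 = m^2" using n m by simp
    show ?thesis
      by (rule exI[of _ k], rule exI[of _ n], rule exI[of _ m], rule exI[of _ l])
         (intro conjI copkn knz no q1 q2 lt)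
  next
    assume "3 dvd V"
    then obtain V' where V': "V = 3*V'" by blast
    have e: "U * V' = f'^4" using UV V' by (simp add: algebra_simps)
    have c: "coprime U V'" using copUV V' by simp
    have "V' > 0" using Vp V' by simp
    obtain l where l: "U = l^4" using pow_split[OF c e] \<open>V' > 0\<close> Up by fastforce
    have e': "V' * U = f'^4" using e by (simp add: ac_simps)
    obtain k where k: "V' = k^4" using pow_split[OF cop_sym[OF c] e'] \<open>V' > 0\<close> Up by fastforce
    have "(f'^2)^2 = (k^2*l^2)^2" using e k l by (simp add: power_mult_distrib algebra_simps flip: power_mult)
    then have ff: "f'^2 = k^2*l^2" by (subst (asm) power2_eq_iff_nonneg) auto
    have copkl: "coprime k l" using c k l by (simp add: coprime_commute)
    have knz: "k \<noteq> 0" and lnz: "l \<noteq> 0" using ff fnz by auto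
    have EE: "E^2 = (3*k^2 - l^2) * (k^2 + l^2)"
    proof -
      have "E^2 = H + 2*f'^2" unfolding H_def by simp
      also have "\<dots> = 3*k^4 - l^4 + 2*k^2*l^2" using HUV V' k l ff by simp
      finally show ?thesis by (simp add: power2_eq_square algebra_simps power4_eq_xxxx)
    qed
    have "odd ((3*k^2 - l^2) * (k^2 + l^2))" unfolding EE[symmetric] using Eo by simp
    then have o1: "odd (3*k^2 - l^2)" and o2: "odd (k^2 + l^2)" by simp_all
    have cop1: "coprime (3*k^2 - l^2) (k^2 + l^2)"
    proof (rule coprimeI)
      fix c assume c1: "c dvd 3*k^2 - l^2" and c2: "c dvd k^2 + l^2"
      have co: "odd c"
      proof (rule notI)
        assume "even c"
        then have "2 dvd k^2 + l^2" using c2 by (rule dvd_trans)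
        then show False using o2 by simp
      qed
      have "c dvd 4*k^2" using dvd_add[OF c1 c2] by simp
      then have ck: "c dvd k^2" using cop4[OF co] coprime_dvd_mult_right_iff by blast
      have "c dvd 4*l^2" using dvd_diff[OF dvd_mult[OF c2, of 3] c1] by (simp add: algebra_simps)
      then have cl: "c dvd l^2" using cop4[OF co] coprime_dvd_mult_right_iff by blast
      have "coprime (k^2) (l^2)" using copkl by simp
      then show "is_unit c" using coprime_common_divisor ck cl by blast
    qed
    have pos: "k^2 + l^2 > 0" using lnz by (simp add: add_nonneg_pos)
    have "E \<noteq> 0" using Eo by auto
    then have "E^2 > 0" by simp
    then have pos2: "3*k^2 - l^2 > 0" using EE pos by (simp add: zero_less_mult_iff)
    obtain p where p: "3*k^2 - l^2 = p^2" using pow_split[OF cop1 EE[symmetric]] pos pos2 by fastforce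
    have "p^2 + l^2 = 3*k^2" using p by simp
    then have "3 dvd p^2 + l^2" by simp
    then have "3 dvd p \<and> 3 dvd l" by (rule three_dvd_sum_sq)
    then obtain p1 l1 where p1: "p = 3*p1" and l1: "l = 3*l1" by blast
    have "3*k^2 = 9*(p1^2 + l1^2)" using p p1 l1 by (simp add: power_mult_distrib algebra_simps)
    then have "k^2 = 3*(p1^2 + l1^2)" by simp
    then have "3 dvd k^2" by simp
    then have "3 dvd k" using prime_dvd_power_iff[OF prime3] by simp
    moreover have "3 dvd l" using l1 by simp
    ultimately have "is_unit (3::int)" using coprime_common_divisor[OF copkl] by blast
    then show ?thesis by simp
  qed
qed




lemma sq_le_abs: "(x::int)^2 \<le> y^2 \<Longrightarrow> nat \<bar>x\<bar> \<le> nat \<bar>y\<bar>"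
  using abs_le_square_iff[of x y] by simp

lemma descC_odd:
  fixes a b g d :: int
  assumes "coprime a b" "a \<noteq> 0" "odd b" "a^2 + b^2 = g^2" "4*a^2 + b^2 = d^2"
  shows False
  using assms
proof (induction "nat \<bar>a\<bar>" arbitrary: a b g d rule: less_induct)
  case less
  note cop = less.prems(1) and anz = less.prems(2) and bo = less.prems(3)
    and e1 = less.prems(4) and e2 = less.prems(5)
  have ae: "even a"
  proof (rule ccontr)
    assume ao: "odd a"
    show False using m4b[OF e1[symmetric] sq4o[OF ao] sq4o[OF bo] sq4[of g]] .
  qed
  have do: "odd d"
  proof -
    have "odd (4*a^2 + b^2)" using bo by simp
    then show ?thesis using e2 by simp
  qed
  define B where "B = \<bar>b\<bar>"
  define D where "D = \<bar>d\<bar>"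
  have B2: "B^2 = b^2" and D2: "D^2 = d^2" unfolding B_def D_def by simp_all
  have Bo: "odd B" and Do: "odd D" using bo do unfolding B_def D_def by simp_all
  have B0: "B \<ge> 0" and D0: "D \<ge> 0" unfolding B_def D_def by simp_all
  have diff: "D^2 - B^2 = 4*a^2" using e2 B2 D2 by simp
  have "4*a^2 > 0" using anz by simp
  then have "B^2 < D^2" using diff by linarith
  then have BD: "B < D" using D0 power_less_imp_less_base by blast
  have "even (D + B)" "even (D - B)" using Bo Do by simp_all
  then obtain X Y where X: "D + B = 2*X" and Y: "D - B = 2*Y" by (meson evenE)
  have XY: "X * Y = a^2"
  proof -
    have "(2*X)*(2*Y) = (D+B)*(D-B)" using X Y by simp
    also have "\<dots> = D^2 - B^2" by (simp add: power2_eq_square algebra_simps)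
    finally show ?thesis using diff by simp
  qed
  have Xp: "X > 0" using X BD B0 by linarith
  have Yp: "Y > 0" using Y BD by linarith
  have BXY: "B = X - Y" using X Y by linarith
  have copXY: "coprime X Y"
  proof (rule coprimeI)
    fix c assume cX: "c dvd X" and cY: "c dvd Y"
    have "c dvd B" using cX cY BXY by simp
    then have cb: "c dvd b" unfolding B_def by simp
    have "coprime c a"
    proof (rule coprimeI)
      fix d' assume "d' dvd c" "d' dvd a"
      moreover have "d' dvd b" using \<open>d' dvd c\<close> cb by (rule dvd_trans)
      ultimately show "is_unit d'" using coprime_common_divisor[OF cop] by blast
    qed
    then have cc: "coprime (c^2) (a^2)" by simp
    have "c*c dvd X*Y" by (rule mult_dvd_mono[OF cX cY])
    then have "c^2 dvd a^2" using XY by (simp add: power2_eq_square)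
    then have "is_unit (c^2)" using coprime_common_divisor[OF cc dvd_refl] by blast
    then have "is_unit c \<or> (2::nat) = 0" by (subst (asm) is_unit_power_iff) assumption
    then show "is_unit c" by simp
  qed
  obtain e where e: "X = e^2" using pow_split[OF copXY XY] Xp Yp by fastforce
  have XY': "Y * X = a^2" using XY by (simp add: ac_simps)
  obtain f where f: "Y = f^2" using pow_split[OF cop_sym[OF copXY] XY'] Xp Yp by fastforce
  have copef: "coprime e f" using copXY e f by simp
  have aa: "a^2 = (e*f)^2" using XY e f by (simp add: power_mult_distrib)
  have enz: "e \<noteq> 0" and fnz: "f \<noteq> 0" using aa anz by auto
  have gg: "e^4 - e^2*f^2 + f^4 = g^2"
  proof -
    have "g^2 = a^2 + B^2" using e1 B2 by simp
    also have "\<dots> = e^2*f^2 + (e^2 - f^2)^2" using aa BXY e f by (simp add: power_mult_distrib)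
    finally show ?thesis by (simp add: power2_eq_square algebra_simps power4_eq_xxxx)
  qed
  have "even ((e*f)^2)" unfolding aa[symmetric] using ae by simp
  then have "even e \<or> even f" by simp
  then show False
  proof
    assume fe: "even f"
    have eo: "odd e" using coprime_odd[OF cop_sym[OF copef] fe] .
    obtain k n m l where kn: "coprime k n" "k \<noteq> 0" "odd n" "k^2 + n^2 = l^2" "4*k^2 + n^2 = m^2"
      and lt: "nat \<bar>k\<bar> < nat \<bar>f\<bar>"
      using Dstep[OF copef eo fe fnz gg] by blast
    have "f^2 \<le> a^2"
    proof -
      have "e^2 \<ge> 1" using enz by (rule one_le_sq)
      then show ?thesis using aa by (simp add: power_mult_distrib mult_le_cancel_right1)
    qed
    then have "nat \<bar>k\<bar> < nat \<bar>a\<bar>" using lt sq_le_abs by fastforce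
    then show False using less.hyps kn by blast
  next
    assume ee: "even e"
    have fo: "odd f" using coprime_odd[OF copef ee] .
    have gg': "f^4 - f^2*e^2 + e^4 = g^2" using gg by (simp add: ac_simps)
    obtain k n m l where kn: "coprime k n" "k \<noteq> 0" "odd n" "k^2 + n^2 = l^2" "4*k^2 + n^2 = m^2"
      and lt: "nat \<bar>k\<bar> < nat \<bar>e\<bar>"
      using Dstep[OF cop_sym[OF copef] fo ee enz gg'] by blast
    have "e^2 \<le> a^2"
    proof -
      have "f^2 \<ge> 1" using fnz by (rule one_le_sq)
      then show ?thesis using aa by (simp add: power_mult_distrib mult_le_cancel_left1)
    qed
    then have "nat \<bar>k\<bar> < nat \<bar>a\<bar>" using lt sq_le_abs by fastforce
    then show False using less.hyps kn by blast
  qed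
qed

lemma descC:
  fixes a b g d :: int
  assumes cop: "coprime a b" and anz: "a \<noteq> 0" and bnz: "b \<noteq> 0"
    and e1: "a^2 + b^2 = g^2" and e2: "4*a^2 + b^2 = d^2"
  shows False
proof (cases "odd b")
  case True show False using descC_odd[OF cop anz True e1 e2] .
next
  case False
  then have be: "even b" by simp
  have ao: "odd a" using coprime_odd[OF cop_sym[OF cop] be] .
  obtain b' where b': "b = 2*b'" using be by blast
  have "d^2 = 4*(a^2 + b'^2)" using e2 b' by (simp add: power_mult_distrib)
  then have "even (d^2)" by simp
  then have "even d" by simp
  then obtain d' where d': "d = 2*d'" by blast
  have E1: "b'^2 + a^2 = d'^2" using e2 b' d' by (simp add: power_mult_distrib)
  have E2: "4*b'^2 + a^2 = g^2" using e1 b' by (simp add: power_mult_distrib)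
  have c: "coprime b' a" using cop b' by (simp add: coprime_commute)
  have "b' \<noteq> 0" using bnz b' by simp
  then show False using descC_odd[OF c _ ao E1 E2] by blast
qed




lemma m4d: "N = 2*S - R \<Longrightarrow> R mod 4 = 0 \<Longrightarrow> S mod 4 = 1 \<Longrightarrow> N mod 4 = 0 \<or> N mod 4 = 1 \<Longrightarrow> False"
  for N R S :: int by presburger

lemma descB:
  fixes r s m n :: int
  assumes cop: "coprime r s" and e1: "2*r^2 - s^2 = m^2" and e2: "2*s^2 - r^2 = n^2"
  shows "r^2 = s^2"
proof (rule ccontr)
  assume neq: "r^2 \<noteq> s^2"
  have ro: "odd r"
  proof (rule notI)
    assume re: "even r"
    then have so: "odd s" using cop coprime_odd by blast
    show False using m4d[OF e2[symmetric] sq4e[OF re] sq4o[OF so] sq4[of n]] .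
  qed
  have so: "odd s"
  proof (rule notI)
    assume se: "even s"
    show False using m4d[OF e1[symmetric] sq4e[OF se] sq4o[OF ro] sq4[of m]] .
  qed
  define K where "K = \<bar>r*s\<bar>"
  define L where "L = r^2 - s^2"
  define w where "w = \<bar>m*n\<bar>"
  have K0: "K \<ge> 0" and w0: "w \<ge> 0" unfolding K_def w_def by simp_all
  have Ko: "odd K" using ro so unfolding K_def by simp
  have mo: "odd m"
  proof -
    have "odd (2*r^2 - s^2)" using so by simp
    then show ?thesis using e1 by simp
  qed
  have no: "odd n"
  proof -
    have "odd (2*s^2 - r^2)" using ro by simp
    then show ?thesis using e2 by simp
  qed
  have wo: "odd w" using mo no unfolding w_def by simp
  have wK: "w^2 = K^2 - 2*L^2"
  proof -
    have "w^2 = m^2 * n^2" unfolding w_def by (simp add: power_mult_distrib)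
    also have "\<dots> = (2*r^2 - s^2) * (2*s^2 - r^2)" using e1 e2 by simp
    finally show ?thesis unfolding K_def L_def
      by (simp add: power_mult_distrib power2_eq_square algebra_simps)
  qed
  have "even L" using ro so unfolding L_def by simp
  then obtain L' where L': "L = 2*L'" by blast
  have Lnz: "L \<noteq> 0" using neq unfolding L_def by simp
  then have L'nz: "L' \<noteq> 0" using L' by simp
  have "2*L^2 > 0" using Lnz by simp
  then have "w^2 < K^2" using wK by linarith
  then have wlt: "w < K" using K0 power_less_imp_less_base by blast
  have "even (K - w)" "even (K + w)" using Ko wo by simp_all
  then obtain P Q where P: "K - w = 2*P" and Q: "K + w = 2*Q" by (meson evenE)
  have PQ: "P * Q = 2*L'^2"
  proof -
    have "(2*P)*(2*Q) = (K-w)*(K+w)" using P Q by simp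
    also have "\<dots> = K^2 - w^2" by (simp add: power2_eq_square algebra_simps)
    also have "\<dots> = 2*L^2" using wK by simp
    finally show ?thesis using L' by (simp add: power_mult_distrib)
  qed
  have Pp: "P > 0" using P wlt by linarith
  have Qp: "Q > 0" using Q wlt w0 by linarith
  have KPQ: "K = P + Q" using P Q by linarith
  have copr: "coprime r (r^2 - s^2)"
  proof (rule coprimeI)
    fix d assume d1: "d dvd r" and d2: "d dvd r^2 - s^2"
    have "d dvd r^2" using d1 by (simp add: power2_eq_square dvd_mult2)
    then have "d dvd r^2 - (r^2 - s^2)" using d2 by (rule dvd_diff)
    then have "d dvd s^2" by simp
    moreover have "coprime r (s^2)" using cop by simp
    ultimately show "is_unit d" using coprime_common_divisor d1 by blast
  qed
  have cops: "coprime s (r^2 - s^2)"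
  proof (rule coprimeI)
    fix d assume d1: "d dvd s" and d2: "d dvd r^2 - s^2"
    have ds: "d dvd s^2" using d1 by (simp add: power2_eq_square dvd_mult2)
    have "d dvd (r^2 - s^2) + s^2" by (rule dvd_add[OF d2 ds])
    then have "d dvd r^2" by simp
    moreover have "coprime s (r^2)" using cop by (simp add: coprime_commute)
    ultimately show "is_unit d" using coprime_common_divisor d1 by blast
  qed
  have copKL: "coprime (r*s) L" unfolding L_def using copr cops by simp
  have copPQ: "coprime P Q"
  proof (rule coprimeI)
    fix c assume cP: "c dvd P" and cQ: "c dvd Q"
    have "c dvd P + Q" using cP cQ by (rule dvd_add)
    then have "c dvd K" using KPQ by simp
    then have cK: "c dvd r*s" unfolding K_def by simp
    have "coprime c L'"
    proof (rule coprimeI)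
      fix d assume dc: "d dvd c" and dL: "d dvd L'"
      have "d dvd r*s" using dc cK by (rule dvd_trans)
      moreover have "d dvd L" using dL L' by simp
      ultimately show "is_unit d" using coprime_common_divisor[OF copKL] by blast
    qed
    then have cc: "coprime (c^2) (L'^2)" by simp
    have "c*c dvd P*Q" by (rule mult_dvd_mono[OF cP cQ])
    then have "c^2 dvd 2 * L'^2" using PQ by (simp add: power2_eq_square)
    then have "c^2 dvd 2" using cc coprime_dvd_mult_left_iff by blast
    then show "is_unit c" using sq_dvd_small_unit by simp
  qed
  have "2 dvd P * Q" using PQ by simp
  then have "2 dvd P \<or> 2 dvd Q" using prime_dvd_mult_iff[OF prime2] by blast
  then obtain \<alpha> \<beta> where ab: "coprime \<alpha> \<beta>" "K = 2*\<alpha>^2 + \<beta>^2" "L'^2 = \<alpha>^2*\<beta>^2"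
  proof
    assume "2 dvd P"
    then obtain P' where P': "P = 2*P'" by blast
    have e: "P' * Q = L'^2" using PQ P' by simp
    have c: "coprime P' Q" using copPQ P' by simp
    have "P' > 0" using Pp P' by simp
    obtain a where a: "P' = a^2" using pow_split[OF c e] \<open>P' > 0\<close> Qp by fastforce
    have e': "Q * P' = L'^2" using e by (simp add: ac_simps)
    obtain b where b: "Q = b^2" using pow_split[OF cop_sym[OF c] e'] \<open>P' > 0\<close> Qp by fastforce
    have "coprime a b" using c a b by simp
    moreover have "K = 2*a^2 + b^2" using KPQ P' a b by simp
    moreover have "L'^2 = a^2*b^2" using e a b by simp
    ultimately show ?thesis using that by blast
  next
    assume "2 dvd Q"
    then obtain Q' where Q': "Q = 2*Q'" by blast
    have e: "P * Q' = L'^2" using PQ Q' by (simp add: ac_simps)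
    have c: "coprime P Q'" using copPQ Q' by simp
    have "Q' > 0" using Qp Q' by simp
    obtain b where b: "P = b^2" using pow_split[OF c e] \<open>Q' > 0\<close> Pp by fastforce
    have e': "Q' * P = L'^2" using e by (simp add: ac_simps)
    obtain a where a: "Q' = a^2" using pow_split[OF cop_sym[OF c] e'] \<open>Q' > 0\<close> Pp by fastforce
    have "coprime a b" using c a b by (simp add: coprime_commute)
    moreover have "K = 2*a^2 + b^2" using KPQ Q' a b by simp
    moreover have "L'^2 = a^2*b^2" using e a b by (simp add: ac_simps)
    ultimately show ?thesis using that by blast
  qed
  have anz: "\<alpha> \<noteq> 0" and bnz: "\<beta> \<noteq> 0" using ab(3) L'nz by auto
  have "even (r^2 + s^2)" using ro so by simp
  then obtain W where W: "r^2 + s^2 = 2*W" by blast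
  have WW: "W^2 = (\<alpha>^2 + \<beta>^2) * (4*\<alpha>^2 + \<beta>^2)"
  proof -
    have "(2*W)^2 = L^2 + 4*K^2" unfolding W[symmetric] L_def K_def
      by (simp add: power_mult_distrib power2_eq_square algebra_simps)
    also have "\<dots> = 4*(L'^2 + (2*\<alpha>^2 + \<beta>^2)^2)" using L' ab(2) by (simp add: power_mult_distrib)
    also have "\<dots> = 4*((\<alpha>^2 + \<beta>^2) * (4*\<alpha>^2 + \<beta>^2))" using ab(3)
      by (simp add: power2_eq_square algebra_simps)
    finally show ?thesis by (simp add: power_mult_distrib)
  qed
  have cop1: "coprime (\<alpha>^2 + \<beta>^2) (4*\<alpha>^2 + \<beta>^2)"
  proof (rule coprimeI)
    fix c assume c1: "c dvd \<alpha>^2 + \<beta>^2" and c2: "c dvd 4*\<alpha>^2 + \<beta>^2"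
    have "c dvd 3*\<alpha>^2" using dvd_diff[OF c2 c1] by simp
    moreover have "c dvd 3*\<beta>^2" using dvd_diff[OF dvd_mult[OF c1, of 4] c2] by (simp add: algebra_simps)
    ultimately have "c dvd 3" using dvd_3_of_coprime[OF ab(1)] by blast
    then have "is_unit c \<or> 3 dvd c" by (rule dvd3_cases)
    then show "is_unit c"
    proof
      assume "3 dvd c"
      then have "3 dvd \<alpha>^2 + \<beta>^2" using c1 by (rule dvd_trans)
      then have "3 dvd \<alpha> \<and> 3 dvd \<beta>" by (rule three_dvd_sum_sq)
      then have "is_unit (3::int)" using coprime_common_divisor[OF ab(1)] by blast
      then show ?thesis by simp
    qed
  qed
  have p1: "\<alpha>^2 + \<beta>^2 > 0" using anz by (simp add: add_pos_nonneg)
  have p2: "4*\<alpha>^2 + \<beta>^2 > 0" using anz by (simp add: add_pos_nonneg)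
  obtain g where g: "\<alpha>^2 + \<beta>^2 = g^2" using pow_split[OF cop1 WW[symmetric]] p1 p2 by fastforce
  have WW': "(4*\<alpha>^2 + \<beta>^2) * (\<alpha>^2 + \<beta>^2) = W^2" using WW by (simp add: ac_simps)
  obtain d where d: "4*\<alpha>^2 + \<beta>^2 = d^2" using pow_split[OF cop_sym[OF cop1] WW'] p1 p2 by fastforce
  show False using descC[OF ab(1) anz bnz g d] .
qed




lemma rat_sq_int:
  fixes z :: int and q :: rat
  assumes "of_int z = q^2"
  shows "\<exists>k. z = k^2"
proof -
  obtain a b where qb: "quotient_of q = (a,b)" by (cases "quotient_of q") auto
  have b0: "b > 0" using quotient_of_denom_pos[OF qb] .
  have cab: "coprime a b" using quotient_of_coprime[OF qb] .
  have q: "q = of_int a / of_int b" using quotient_of_div[OF qb] .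
  have "(of_int z :: rat) = of_int a ^ 2 / of_int b ^ 2" using assms q by (simp add: power_divide)
  then have "(of_int z :: rat) * of_int b ^ 2 = of_int a ^ 2" using b0 by (simp add: field_simps)
  then have "(of_int (z * b^2) :: rat) = of_int (a^2)" by simp
  then have zb: "z * b^2 = a^2" by (simp only: of_int_eq_iff)
  then have "b^2 dvd a^2" by (metis dvd_triv_right)
  then have "b dvd a" by simp
  then have "is_unit b" using coprime_common_divisor[OF cab _ dvd_refl] by blast
  then have "b = 1" using b0 by auto
  then show ?thesis using zb by auto
qed

lemma reduce:
  fixes x y X0 Y0 A N k :: int
  assumes e: "X0*Y0 = A^2*N" and hx: "x = X0 \<or> x = -X0" and hy: "y = Y0 \<or> y = -Y0"
    and k: "x*y = k^2" and knz: "k \<noteq> 0"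
  shows "\<exists>j. j \<noteq> 0 \<and> (N = j^2 \<or> -N = j^2)"
proof -
  have "x*y = X0*Y0 \<or> x*y = -(X0*Y0)" using hx hy by auto
  then have h: "A^2*N = k^2 \<or> A^2*(-N) = k^2" using e k by auto
  have "k^2 \<noteq> 0" using knz by simp
  then have Anz: "A \<noteq> 0" using h by auto
  from h show ?thesis
  proof
    assume "A^2*N = k^2"
    then obtain j where j: "N = j^2" using sq_cancel[OF Anz] by blast
    then have "j \<noteq> 0" using \<open>A^2*N = k^2\<close> knz by auto
    then show ?thesis using j by blast
  next
    assume "A^2*(-N) = k^2"
    then obtain j where j: "-N = j^2" using sq_cancel[OF Anz] by blast
    then have "j \<noteq> 0" using \<open>A^2*(-N) = k^2\<close> knz by auto
    then show ?thesis using j by blast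
  qed
qed

lemma nu: "coprime (r::int) s \<Longrightarrow> \<not> 3 dvd r^2 + s^2"
proof
  assume "coprime r s" "3 dvd r^2 + s^2"
  then have "3 dvd r \<and> 3 dvd s" using three_dvd_sum_sq by blast
  then have "is_unit (3::int)" using coprime_common_divisor[OF \<open>coprime r s\<close>] by blast
  then show False by simp
qed

lemma nv: "coprime (r::int) s \<Longrightarrow> \<not> 3 dvd 2*r^2 - s^2"
proof
  assume c: "coprime r s" and h: "3 dvd 2*r^2 - s^2"
  have "3 dvd 3*r^2 - (2*r^2 - s^2)" using dvd_diff[OF dvd_triv_left h] .
  then have "3 dvd r^2 + s^2" by simp
  then show False using nu[OF c] by simp
qed

lemma three_sq: "3 dvd (j::int)^2 \<Longrightarrow> \<exists>j'. j^2 = 9*j'^2"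
proof -
  assume "3 dvd j^2"
  then have "3 dvd j" using prime_dvd_power_iff[OF prime3] by simp
  then obtain j' where "j = 3*j'" by blast
  then show ?thesis by (auto simp: power_mult_distrib)
qed

lemma f3u:
  fixes r s j :: int
  assumes cop: "coprime r s" and rnz: "r \<noteq> 0"
    and h: "3*(r^2+s^2) = j^2 \<or> -(3*(r^2+s^2)) = j^2"
  shows False
  using h
proof
  assume h1: "3*(r^2+s^2) = j^2"
  then have "3 dvd j^2" by (metis dvd_triv_left)
  then obtain j' where "j^2 = 9*j'^2" using three_sq by blast
  then have "r^2 + s^2 = 3*j'^2" using h1 by simp
  then have "3 dvd r^2 + s^2" by simp
  then show False using nu[OF cop] by simp
next
  assume h2: "-(3*(r^2+s^2)) = j^2"
  have "r^2 > 0" using rnz by simp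
  moreover have "s^2 \<ge> 0" "j^2 \<ge> 0" by simp_all
  moreover have "j^2 + 3*r^2 + 3*s^2 = 0" using h2 by (simp add: algebra_simps)
  ultimately show False by linarith
qed

lemma f3v:
  fixes r s j :: int
  assumes cop: "coprime r s"
    and h: "3*(2*r^2-s^2) = j^2 \<or> -(3*(2*r^2-s^2)) = j^2"
  shows False
proof -
  have "3 dvd j^2" using h by (metis dvd_minus_iff dvd_triv_left)
  then obtain j' where j': "j^2 = 9*j'^2" using three_sq by blast
  have "2*r^2-s^2 = 3*j'^2 \<or> -(2*r^2-s^2) = 3*j'^2" using h j' by auto
  then have "3 dvd 2*r^2-s^2" by (metis dvd_minus_iff dvd_triv_left)
  then show False using nv[OF cop] by simp
qed

lemma cop_uc: "coprime (r::int) s \<Longrightarrow> coprime (r^2+s^2) (2*s^2-r^2)"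
proof (rule coprimeI)
  fix d assume cop: "coprime r s" and d1: "d dvd r^2+s^2" and d2: "d dvd 2*s^2-r^2"
  have "d dvd 3*s^2" using dvd_add[OF d1 d2] by simp
  moreover have "d dvd 3*r^2" using dvd_diff[OF dvd_mult[OF d1, of 2] d2] by (simp add: algebra_simps)
  ultimately have "d dvd 3" using dvd_3_of_coprime[OF cop] by blast
  then have "is_unit d \<or> 3 dvd d" by (rule dvd3_cases)
  then show "is_unit d"
  proof
    assume "3 dvd d"
    then have "3 dvd r^2+s^2" using d1 by (rule dvd_trans)
    then show ?thesis using nu[OF cop] by simp
  qed
qed

lemma cop_vc: "coprime (r::int) s \<Longrightarrow> coprime (2*r^2-s^2) (2*s^2-r^2)"
proof (rule coprimeI)
  fix d assume cop: "coprime r s" and d1: "d dvd 2*r^2-s^2" and d2: "d dvd 2*s^2-r^2"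
  have "d dvd 3*r^2" using dvd_add[OF dvd_mult[OF d1, of 2] d2] by (simp add: algebra_simps)
  moreover have "d dvd 3*s^2" using dvd_add[OF d1 dvd_mult[OF d2, of 2]] by (simp add: algebra_simps)
  ultimately have "d dvd 3" using dvd_3_of_coprime[OF cop] by blast
  then have "is_unit d \<or> 3 dvd d" by (rule dvd3_cases)
  then show "is_unit d"
  proof
    assume "3 dvd d"
    then have "3 dvd 2*r^2-s^2" using d1 by (rule dvd_trans)
    then show ?thesis using nv[OF cop] by simp
  qed
qed

lemma s0_case: "coprime (r::int) 0 \<Longrightarrow> \<bar>r\<bar> \<le> 1"
  by simp

lemma fuc:
  fixes r s j :: int
  assumes cop: "coprime r s" and rnz: "r \<noteq> 0"
    and h: "(r^2+s^2)*(2*s^2-r^2) = j^2 \<or> -((r^2+s^2)*(2*s^2-r^2)) = j^2" and jnz: "j \<noteq> 0"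
  shows "\<bar>r\<bar> \<le> 1 \<and> \<bar>s\<bar> \<le> 1"
proof (cases "s = 0")
  case True then show ?thesis using cop by simp
next
  case snz: False
  have up: "r^2+s^2 > 0" using rnz by (simp add: add_pos_nonneg)
  have jp: "j^2 > 0" using jnz by simp
  have cuc: "coprime (r^2+s^2) (2*s^2-r^2)" using cop_uc[OF cop] .
  from h show ?thesis
  proof
    assume h1: "(r^2+s^2)*(2*s^2-r^2) = j^2"
    then have "(r^2+s^2)*(2*s^2-r^2) > 0" using jp by simp
    then have cp: "2*s^2-r^2 > 0" using up zero_less_mult_pos by blast
    obtain m where m: "r^2+s^2 = m^2" using pow_split[OF cuc h1] up cp by fastforce
    have h1': "(2*s^2-r^2)*(r^2+s^2) = j^2" using h1 by (simp add: ac_simps)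
    obtain n where n: "2*s^2-r^2 = n^2" using pow_split[OF cop_sym[OF cuc] h1'] up cp by fastforce
    have "m^2 + n^2 = 3*s^2" using m n by simp
    then have "3 dvd m^2 + n^2" by simp
    then have "3 dvd m \<and> 3 dvd n" by (rule three_dvd_sum_sq)
    then obtain m' n' where mm: "m = 3*m'" and nn: "n = 3*n'" by blast
    have "3*s^2 = 9*(m'^2 + n'^2)" using \<open>m^2 + n^2 = 3*s^2\<close> mm nn by (simp add: power_mult_distrib)
    then have "s^2 = 3*(m'^2+n'^2)" by simp
    then have "3 dvd s^2" by simp
    then have s3: "3 dvd s" using prime_dvd_power_iff[OF prime3] by simp
    have "r^2 = 3*(3*m'^2) - s^2" using m mm by (simp add: power_mult_distrib)
    then have "3 dvd r^2" using \<open>3 dvd s^2\<close> by (metis dvd_diff dvd_triv_left)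
    then have "3 dvd r" using prime_dvd_power_iff[OF prime3] by simp
    then have "is_unit (3::int)" using coprime_common_divisor[OF cop _ s3] by blast
    then show ?thesis by simp
  next
    assume h2: "-((r^2+s^2)*(2*s^2-r^2)) = j^2"
    then have h2': "(r^2+s^2)*(r^2-2*s^2) = j^2" by (simp add: algebra_simps)
    then have "(r^2+s^2)*(r^2-2*s^2) > 0" using jp by simp
    then have cp: "r^2-2*s^2 > 0" using up zero_less_mult_pos by blast
    have cuc': "coprime (r^2+s^2) (r^2-2*s^2)"
    proof -
      have eq: "r^2-2*s^2 = -(2*s^2-r^2)" by simp
      show ?thesis unfolding eq coprime_minus_right_iff by (rule cuc)
    qed
    obtain m where m: "r^2+s^2 = m^2" using pow_split[OF cuc' h2'] up cp by fastforce
    have h2'': "(r^2-2*s^2)*(r^2+s^2) = j^2" using h2' by (simp add: ac_simps)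
    obtain n where n: "r^2-2*s^2 = n^2" using pow_split[OF cop_sym[OF cuc'] h2''] up cp by fastforce
    show ?thesis using descA[OF cop snz m n] by blast
  qed
qed


lemma sq_eq_unit:
  fixes r s :: int
  assumes cop: "coprime r s" and e: "r^2 = s^2"
  shows "\<bar>r\<bar> \<le> 1 \<and> \<bar>s\<bar> \<le> 1"
proof -
  have "\<bar>r\<bar>^2 = \<bar>s\<bar>^2" using e by simp
  then have rs: "\<bar>r\<bar> = \<bar>s\<bar>" by (subst (asm) power2_eq_iff_nonneg) auto
  then have "\<bar>r\<bar> dvd \<bar>s\<bar>" by simp
  then have "r dvd s" by simp
  then have "is_unit r" using coprime_common_divisor[OF cop dvd_refl] by blast
  then have "\<bar>r\<bar> = 1" by simp
  then show ?thesis using rs by simp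
qed

lemma fvc:
  fixes r s j :: int
  assumes cop: "coprime r s" and rnz: "r \<noteq> 0"
    and h: "(2*r^2-s^2)*(2*s^2-r^2) = j^2 \<or> -((2*r^2-s^2)*(2*s^2-r^2)) = j^2" and jnz: "j \<noteq> 0"
  shows "\<bar>r\<bar> \<le> 1 \<and> \<bar>s\<bar> \<le> 1"
proof -
  have jp: "j^2 > 0" using jnz by simp
  have cvc: "coprime (2*r^2-s^2) (2*s^2-r^2)" using cop_vc[OF cop] .
  have sumvc: "(2*r^2-s^2) + (2*s^2-r^2) = r^2 + s^2" by simp
  have rp: "r^2 > 0" using rnz by simp
  have sp: "s^2 \<ge> 0" by simp
  from h show ?thesis
  proof
    assume h1: "(2*r^2-s^2)*(2*s^2-r^2) = j^2"
    then have pr: "(2*r^2-s^2)*(2*s^2-r^2) > 0" using jp by simp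
    show ?thesis
    proof (cases "2*r^2-s^2 > 0")
      case True
      then have cp: "2*s^2-r^2 > 0" using pr zero_less_mult_pos by blast
      obtain m where m: "2*r^2-s^2 = m^2" using pow_split[OF cvc h1] True cp by fastforce
      have h1': "(2*s^2-r^2)*(2*r^2-s^2) = j^2" using h1 by (simp add: ac_simps)
      obtain n where n: "2*s^2-r^2 = n^2" using pow_split[OF cop_sym[OF cvc] h1'] True cp by fastforce
      show ?thesis using sq_eq_unit[OF cop descB[OF cop m n]] .
    next
      case False
      then have "2*r^2-s^2 < 0" using pr by (cases "2*r^2-s^2 = 0") auto
      then have "2*s^2-r^2 < 0" using pr by (simp add: zero_less_mult_iff)
      then show ?thesis using \<open>2*r^2-s^2 < 0\<close> rp sp by linarith
    qed
  next
    assume h2: "-((2*r^2-s^2)*(2*s^2-r^2)) = j^2"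
    have e0: "(2*r^2-s^2)*(r^2-2*s^2) = j^2" using h2 by (simp add: algebra_simps)
    then have pr: "(2*r^2-s^2)*(r^2-2*s^2) > 0" using jp by simp
    show ?thesis
    proof (cases "2*r^2-s^2 > 0")
      case True
      then have cp: "r^2 - 2*s^2 > 0" using pr zero_less_mult_pos by blast
      have e: "(2*r^2-s^2)*(r^2-2*s^2) = j^2" using e0 .
      have eq: "r^2-2*s^2 = -(2*s^2-r^2)" by simp
      have c': "coprime (2*r^2-s^2) (r^2-2*s^2)" unfolding eq coprime_minus_right_iff by (rule cvc)
      obtain m where m: "2*r^2-s^2 = m^2" using pow_split[OF c' e] True cp by fastforce
      have e': "(r^2-2*s^2)*(2*r^2-s^2) = j^2" using e by (simp add: ac_simps)
      obtain n where n: "r^2-2*s^2 = n^2" using pow_split[OF cop_sym[OF c'] e'] True cp by fastforce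
      have "m^2 + n^2 = 3*(r^2 - s^2)" using m n by simp
      then have "3 dvd m^2 + n^2" by simp
      then have "3 dvd n" using three_dvd_sum_sq by blast
      then have "3 dvd n^2" by (simp add: power2_eq_square dvd_mult2)
      then have "3 dvd (r^2 - 2*s^2) + 3*s^2" using n by simp
      moreover have "(r^2 - 2*s^2) + 3*s^2 = r^2 + s^2" by simp
      ultimately have "3 dvd r^2 + s^2" by metis
      then show ?thesis using nu[OF cop] by simp
    next
      case False
      then have neg: "2*r^2-s^2 < 0" using pr by (cases "2*r^2-s^2 = 0") auto
      have pr': "(s^2 - 2*r^2)*(2*s^2-r^2) > 0" using pr by (simp add: algebra_simps)
      have np: "s^2 - 2*r^2 > 0" using neg by simp
      then have cp: "2*s^2 - r^2 > 0" using pr' zero_less_mult_pos by blast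
      have e: "(s^2-2*r^2)*(2*s^2-r^2) = j^2" using h2 by (simp add: algebra_simps)
      have eq: "s^2-2*r^2 = -(2*r^2-s^2)" by simp
      have c': "coprime (s^2-2*r^2) (2*s^2-r^2)" unfolding eq coprime_minus_left_iff by (rule cvc)
      obtain m where m: "s^2-2*r^2 = m^2" using pow_split[OF c' e] np cp by fastforce
      have e': "(2*s^2-r^2)*(s^2-2*r^2) = j^2" using e by (simp add: ac_simps)
      obtain n where n: "2*s^2-r^2 = n^2" using pow_split[OF cop_sym[OF c'] e'] np cp by fastforce
      have "m^2 + n^2 = 3*(s^2 - r^2)" using m n by simp
      then have "3 dvd m^2 + n^2" by simp
      then have "3 dvd m" using three_dvd_sum_sq by blast
      then have "3 dvd m^2" by (simp add: power2_eq_square dvd_mult2)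
      then have "3 dvd (s^2 - 2*r^2) + 3*r^2" using m by simp
      moreover have "(s^2 - 2*r^2) + 3*r^2 = r^2 + s^2" by simp
      ultimately have "3 dvd r^2 + s^2" by metis
      then show ?thesis using nu[OF cop] by simp
    qed
  qed
qed

lemma key:
  fixes r s x y :: int
  assumes cop: "coprime r s" and rnz: "r \<noteq> 0" and xS: "x \<in> Sset r s" and yT: "y \<in> Tset r s"
    and sc: "same_sq_class (of_int x) (of_int y)"
  shows "\<bar>r\<bar> \<le> 1 \<and> \<bar>s\<bar> \<le> 1"
proof -
  define u where "u = uval r s"
  define v where "v = vval r s"
  have uu: "u = r^2+s^2" unfolding u_def uval_def ..
  have vv: "v = 2*r^2-s^2" unfolding v_def vval_def ..
  have uv1: "u + v = 3*r^2" using uu vv by simp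
  have uv2: "u - v = 2*s^2-r^2" using uu vv by simp
  have uv3: "u^2 - v^2 = 3*r^2*(2*s^2-r^2)"
  proof -
    have "u^2 - v^2 = (u+v)*(u-v)" by (simp add: power2_eq_square algebra_simps)
    then show ?thesis using uv1 uv2 by simp
  qed
  from sc have xnz: "x \<noteq> 0" and ynz: "y \<noteq> 0" and "\<exists>q::rat. of_int x / of_int y = q^2"
    unfolding same_sq_class_def by auto
  then obtain q :: rat where q: "of_int x / of_int y = q^2" by blast
  have "(of_int (x*y) :: rat) = (q * of_int y)^2"
  proof -
    have "(of_int x :: rat) = q^2 * of_int y" using q ynz by (simp add: field_simps)
    then show ?thesis by (simp add: power2_eq_square)
  qed
  then obtain k where k: "x*y = k^2" using rat_sq_int by blast
  have knz: "k \<noteq> 0" using k xnz ynz by auto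
  have hx: "(x = u*(u+v) \<or> x = -(u*(u+v))) \<or> (x = u*(u-v) \<or> x = -(u*(u-v))) \<or>
            (x = v*(u+v) \<or> x = -(v*(u+v))) \<or> (x = v*(u-v) \<or> x = -(v*(u-v)))"
    using xS unfolding Sset_def Let_def u_def[symmetric] v_def[symmetric] by auto
  have hy: "(y = u*v \<or> y = -(u*v)) \<or> (y = u^2-v^2 \<or> y = -(u^2-v^2))"
    using yT unfolding Tset_def Let_def u_def[symmetric] v_def[symmetric] by auto
  define c where "c = 2*s^2-r^2"
  have cc: "u - v = c" using uv2 unfolding c_def .
  have ccc: "u^2 - v^2 = 3*r^2*c" using uv3 unfolding c_def .
  have res: "(\<exists>j. j \<noteq> 0 \<and> (3*u = j^2 \<or> -(3*u) = j^2)) \<or> (\<exists>j. j \<noteq> 0 \<and> (3*v = j^2 \<or> -(3*v) = j^2))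
     \<or> (\<exists>j. j \<noteq> 0 \<and> (u*c = j^2 \<or> -(u*c) = j^2)) \<or> (\<exists>j. j \<noteq> 0 \<and> (v*c = j^2 \<or> -(v*c) = j^2))"
  proof -
    have i1: "u*(u+v)*(u*v) = (r*u)^2*(3*v)" using uv1 by (simp add: power2_eq_square algebra_simps)
    have i2: "u*(u+v)*(u^2-v^2) = (3*r^2)^2*(u*c)" using uv1 ccc by (simp add: power2_eq_square algebra_simps)
    have i3: "u*(u-v)*(u*v) = u^2*(v*c)" using cc by (simp add: power2_eq_square algebra_simps)
    have i4: "u*(u-v)*(u^2-v^2) = (r*c)^2*(3*u)" using cc ccc by (simp add: power2_eq_square algebra_simps)
    have i5: "v*(u+v)*(u*v) = (r*v)^2*(3*u)" using uv1 by (simp add: power2_eq_square algebra_simps)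
    have i6: "v*(u+v)*(u^2-v^2) = (3*r^2)^2*(v*c)" using uv1 ccc by (simp add: power2_eq_square algebra_simps)
    have i7: "v*(u-v)*(u*v) = v^2*(u*c)" using cc by (simp add: power2_eq_square algebra_simps)
    have i8: "v*(u-v)*(u^2-v^2) = (r*c)^2*(3*v)" using cc ccc by (simp add: power2_eq_square algebra_simps)
    have r1: "\<exists>j. j \<noteq> 0 \<and> (3*v = j^2 \<or> -(3*v) = j^2)"
      if "x = u*(u+v) \<or> x = -(u*(u+v))" "y = u*v \<or> y = -(u*v)"
      using reduce[OF i1 that k knz] .
    have r2: "\<exists>j. j \<noteq> 0 \<and> (u*c = j^2 \<or> -(u*c) = j^2)"
      if "x = u*(u+v) \<or> x = -(u*(u+v))" "y = u^2-v^2 \<or> y = -(u^2-v^2)"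
      using reduce[OF i2 that k knz] .
    have r3: "\<exists>j. j \<noteq> 0 \<and> (v*c = j^2 \<or> -(v*c) = j^2)"
      if "x = u*(u-v) \<or> x = -(u*(u-v))" "y = u*v \<or> y = -(u*v)"
      using reduce[OF i3 that k knz] .
    have r4: "\<exists>j. j \<noteq> 0 \<and> (3*u = j^2 \<or> -(3*u) = j^2)"
      if "x = u*(u-v) \<or> x = -(u*(u-v))" "y = u^2-v^2 \<or> y = -(u^2-v^2)"
      using reduce[OF i4 that k knz] .
    have r5: "\<exists>j. j \<noteq> 0 \<and> (3*u = j^2 \<or> -(3*u) = j^2)"
      if "x = v*(u+v) \<or> x = -(v*(u+v))" "y = u*v \<or> y = -(u*v)"
      using reduce[OF i5 that k knz] .
    have r6: "\<exists>j. j \<noteq> 0 \<and> (v*c = j^2 \<or> -(v*c) = j^2)"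
      if "x = v*(u+v) \<or> x = -(v*(u+v))" "y = u^2-v^2 \<or> y = -(u^2-v^2)"
      using reduce[OF i6 that k knz] .
    have r7: "\<exists>j. j \<noteq> 0 \<and> (u*c = j^2 \<or> -(u*c) = j^2)"
      if "x = v*(u-v) \<or> x = -(v*(u-v))" "y = u*v \<or> y = -(u*v)"
      using reduce[OF i7 that k knz] .
    have r8: "\<exists>j. j \<noteq> 0 \<and> (3*v = j^2 \<or> -(3*v) = j^2)"
      if "x = v*(u-v) \<or> x = -(v*(u-v))" "y = u^2-v^2 \<or> y = -(u^2-v^2)"
      using reduce[OF i8 that k knz] .
    have A: "x = u*(u+v) \<or> x = -(u*(u+v)) \<Longrightarrow> ?thesis"
      using hy r1 r2 by blast
    have B: "x = u*(u-v) \<or> x = -(u*(u-v)) \<Longrightarrow> ?thesis"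
      using hy r3 r4 by blast
    have C: "x = v*(u+v) \<or> x = -(v*(u+v)) \<Longrightarrow> ?thesis"
      using hy r5 r6 by blast
    have D: "x = v*(u-v) \<or> x = -(v*(u-v)) \<Longrightarrow> ?thesis"
      using hy r7 r8 by blast
    show ?thesis using hx A B C D by blast
  qed
  then show ?thesis
  proof (elim disjE)
    assume "\<exists>j. j \<noteq> 0 \<and> (3*u = j^2 \<or> -(3*u) = j^2)"
    then obtain j where "j \<noteq> 0" "3*u = j^2 \<or> -(3*u) = j^2" by blast
    then have "3*(r^2+s^2) = j^2 \<or> -(3*(r^2+s^2)) = j^2" unfolding uu by blast
    then have False using f3u[OF cop rnz] by blast
    then show ?thesis ..
  next
    assume "\<exists>j. j \<noteq> 0 \<and> (3*v = j^2 \<or> -(3*v) = j^2)"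
    then obtain j where "j \<noteq> 0" "3*v = j^2 \<or> -(3*v) = j^2" by blast
    then have "3*(2*r^2-s^2) = j^2 \<or> -(3*(2*r^2-s^2)) = j^2" unfolding vv by blast
    then have False using f3v[OF cop] by blast
    then show ?thesis ..
  next
    assume "\<exists>j. j \<noteq> 0 \<and> (u*c = j^2 \<or> -(u*c) = j^2)"
    then obtain j where jnz: "j \<noteq> 0" and "u*c = j^2 \<or> -(u*c) = j^2" by blast
    then have "(r^2+s^2)*(2*s^2-r^2) = j^2 \<or> -((r^2+s^2)*(2*s^2-r^2)) = j^2" unfolding uu c_def by blast
    then show ?thesis using fuc[OF cop rnz _ jnz] by blast
  next
    assume "\<exists>j. j \<noteq> 0 \<and> (v*c = j^2 \<or> -(v*c) = j^2)"
    then obtain j where jnz: "j \<noteq> 0" and "v*c = j^2 \<or> -(v*c) = j^2" by blast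
    then have "(2*r^2-s^2)*(2*s^2-r^2) = j^2 \<or> -((2*r^2-s^2)*(2*s^2-r^2)) = j^2" unfolding vv c_def by blast
    then show ?thesis using fvc[OF cop rnz _ jnz] by blast
  qed
qed

theorem lemma6p4:
  shows "finite {p :: int \<times> int. coprime (fst p) (snd p) \<and> fst p \<noteq> 0 \<and>
            (\<exists>x \<in> Sset (fst p) (snd p). \<exists>y \<in> Tset (fst p) (snd p).
               same_sq_class (of_int x) (of_int y))}"
proof (rule finite_subset)
  show "finite ({-1..1} \<times> {-1..1} :: (int \<times> int) set)" by simp
  show "{p :: int \<times> int. coprime (fst p) (snd p) \<and> fst p \<noteq> 0 \<and>
            (\<exists>x \<in> Sset (fst p) (snd p). \<exists>y \<in> Tset (fst p) (snd p).
               same_sq_class (of_int x) (of_int y))} \<subseteq> {-1..1} \<times> {-1..1}"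
  proof
    fix p :: "int \<times> int"
    assume "p \<in> {p :: int \<times> int. coprime (fst p) (snd p) \<and> fst p \<noteq> 0 \<and>
            (\<exists>x \<in> Sset (fst p) (snd p). \<exists>y \<in> Tset (fst p) (snd p).
               same_sq_class (of_int x) (of_int y))}"
    then obtain x y where h: "coprime (fst p) (snd p)" "fst p \<noteq> 0" "x \<in> Sset (fst p) (snd p)"
      "y \<in> Tset (fst p) (snd p)" "same_sq_class (of_int x) (of_int y)" by blast
    have "\<bar>fst p\<bar> \<le> 1 \<and> \<bar>snd p\<bar> \<le> 1" using key[OF h] .
    then show "p \<in> {-1..1} \<times> {-1..1}" by (cases p) auto
  qed
qed



end
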